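(* Let $\mathcal{C},\mathcal{D}$ be categories, $R$ a monad on $\mathcal{C}\times\mathcal{D}$ and $A\in\mathcal{D}$. Let $R_{A,1}$ be the monad on $\mathcal{C}$ with $R_{A,1}(X)=\mathrm{pr}_{\mathcal{C}}(R(X,A))$, unit $\mathrm{pr}_{\mathcal{C}}(\eta_{(X,A)})$ and $\mathrm{bind}'(f)=\mathrm{pr}_{\mathcal{C}}(\mathrm{bind}(f,\mathrm{pr}_{\mathcal{D}}(\eta_{(X',A)})))$ for $f:X\to R_{A,1}(X')$. Then the functor $M_{A,1}:\mathcal{C}\to\mathcal{C}\times\mathcal{D}$, $X\mapsto R(X,A)$, together with the morphisms $$\rho(f):=\mathrm{bind}(f,\mathrm{pr}_{\mathcal{D}}(\eta_{(X',A)})):R(X,A)\to R(X',A)\qquad(f:X\to R_{A,1}(X')),$$ is a left $R_{A,1}$-module with values in $\mathcal{C}\times\mathcal{D}$.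
   Context: Monads are given in Kleisli form: $R(X)$, $\eta_X:X\to R(X)$, and $\mathrm{bind}(f):R(X)\to R(Y)$ for $f:X\to R(Y)$, satisfying $\mathrm{bind}(\eta_X)=\mathrm{id}$, $\mathrm{bind}(f)\circ\eta_X=f$, $\mathrm{bind}(\mathrm{bind}(g)\circ f)=\mathrm{bind}(g)\circ\mathrm{bind}(f)$. For a monad $R'$ on $\mathcal{C}$, a left $R'$-module with values in $\mathcal{E}$ is a functor $LM:\mathcal{C}\to\mathcal{E}$ with morphisms $\rho(f):LM(X)\to LM(X')$ for every $f:X\to R'(X')$ such that $\rho(\eta'_X)=\mathrm{id}$ and $\rho(g)\circ\rho(f)=\rho(\mathrm{bind}'(g)\circ f)$. $(f,\mathrm{pr}_{\mathcal{D}}(\eta_{(X',A)}))$ denotes the morphism $(X,A)\to R(X',A)$ in $\mathcal{C}\times\mathcal{D}$ with these two components. *)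

theory Defs
  imports Main
begin

text \<open>Categories with explicit objects, hom-sets and typed composition.
  cmp C X Y Z g f is the composite g o f of f : X -> Y and g : Y -> Z.\<close>

record ('o, 'a) cat =
  Ob :: "'o set"
  Hom :: "'o \<Rightarrow> 'o \<Rightarrow> 'a set"
  cmp :: "'o \<Rightarrow> 'o \<Rightarrow> 'o \<Rightarrow> 'a \<Rightarrow> 'a \<Rightarrow> 'a"
  ident :: "'o \<Rightarrow> 'a"

definition category :: "('o, 'a) cat \<Rightarrow> bool" where
  "category C \<longleftrightarrow>
     (\<forall>X\<in>Ob C. ident C X \<in> Hom C X X) \<and>
     (\<forall>X\<in>Ob C. \<forall>Y\<in>Ob C. \<forall>Z\<in>Ob C. \<forall>f g.
        f \<in> Hom C X Y \<longrightarrow> g \<in> Hom C Y Z \<longrightarrow> cmp C X Y Z g f \<in> Hom C X Z) \<and>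
     (\<forall>X\<in>Ob C. \<forall>Y\<in>Ob C. \<forall>f. f \<in> Hom C X Y \<longrightarrow>
        cmp C X Y Y (ident C Y) f = f \<and> cmp C X X Y f (ident C X) = f) \<and>
     (\<forall>W\<in>Ob C. \<forall>X\<in>Ob C. \<forall>Y\<in>Ob C. \<forall>Z\<in>Ob C. \<forall>f g h.
        f \<in> Hom C W X \<longrightarrow> g \<in> Hom C X Y \<longrightarrow> h \<in> Hom C Y Z \<longrightarrow>
        cmp C W Y Z h (cmp C W X Y g f) = cmp C W X Z (cmp C X Y Z h g) f)"

definition prod_cat :: "('o, 'a) cat \<Rightarrow> ('p, 'b) cat \<Rightarrow> ('o \<times> 'p, 'a \<times> 'b) cat" where
  "prod_cat C D =
     \<lparr> Ob = Ob C \<times> Ob D,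
       Hom = (\<lambda>(X, A) (Y, B). Hom C X Y \<times> Hom D A B),
       cmp = (\<lambda>(X, A) (Y, B) (Z, E) (g, g') (f, f'). (cmp C X Y Z g f, cmp D A B E g' f')),
       ident = (\<lambda>(X, A). (ident C X, ident D A)) \<rparr>"

definition kleisli_monad ::
  "('o, 'a) cat \<Rightarrow> ('o \<Rightarrow> 'o) \<Rightarrow> ('o \<Rightarrow> 'a) \<Rightarrow> ('o \<Rightarrow> 'o \<Rightarrow> 'a \<Rightarrow> 'a) \<Rightarrow> bool" where
  "kleisli_monad K R eta bind \<longleftrightarrow>
     (\<forall>X\<in>Ob K. R X \<in> Ob K \<and> eta X \<in> Hom K X (R X)) \<and>
     (\<forall>X\<in>Ob K. \<forall>Y\<in>Ob K. \<forall>f. f \<in> Hom K X (R Y) \<longrightarrow> bind X Y f \<in> Hom K (R X) (R Y)) \<and>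
     (\<forall>X\<in>Ob K. bind X X (eta X) = ident K (R X)) \<and>
     (\<forall>X\<in>Ob K. \<forall>Y\<in>Ob K. \<forall>f. f \<in> Hom K X (R Y) \<longrightarrow>
        cmp K X (R X) (R Y) (bind X Y f) (eta X) = f) \<and>
     (\<forall>X\<in>Ob K. \<forall>Y\<in>Ob K. \<forall>Z\<in>Ob K. \<forall>f g.
        f \<in> Hom K X (R Y) \<longrightarrow> g \<in> Hom K Y (R Z) \<longrightarrow>
        bind X Z (cmp K X (R Y) (R Z) (bind Y Z g) f)
          = cmp K (R X) (R Y) (R Z) (bind Y Z g) (bind X Y f))"

definition is_functor ::
  "('o, 'a) cat \<Rightarrow> ('p, 'b) cat \<Rightarrow> ('o \<Rightarrow> 'p) \<Rightarrow> ('o \<Rightarrow> 'o \<Rightarrow> 'a \<Rightarrow> 'b) \<Rightarrow> bool" where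
  "is_functor C E Fo Fa \<longleftrightarrow>
     (\<forall>X\<in>Ob C. Fo X \<in> Ob E) \<and>
     (\<forall>X\<in>Ob C. \<forall>Y\<in>Ob C. \<forall>u. u \<in> Hom C X Y \<longrightarrow> Fa X Y u \<in> Hom E (Fo X) (Fo Y)) \<and>
     (\<forall>X\<in>Ob C. Fa X X (ident C X) = ident E (Fo X)) \<and>
     (\<forall>X\<in>Ob C. \<forall>Y\<in>Ob C. \<forall>Z\<in>Ob C. \<forall>u v.
        u \<in> Hom C X Y \<longrightarrow> v \<in> Hom C Y Z \<longrightarrow>
        Fa X Z (cmp C X Y Z v u) = cmp E (Fo X) (Fo Y) (Fo Z) (Fa Y Z v) (Fa X Y u))"

definition left_module ::
  "('o, 'a) cat \<Rightarrow> ('o \<Rightarrow> 'o) \<Rightarrow> ('o \<Rightarrow> 'a) \<Rightarrow> ('o \<Rightarrow> 'o \<Rightarrow> 'a \<Rightarrow> 'a)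
   \<Rightarrow> ('p, 'b) cat \<Rightarrow> ('o \<Rightarrow> 'p) \<Rightarrow> ('o \<Rightarrow> 'o \<Rightarrow> 'a \<Rightarrow> 'b) \<Rightarrow> ('o \<Rightarrow> 'o \<Rightarrow> 'a \<Rightarrow> 'b) \<Rightarrow> bool" where
  "left_module C R' eta' bind' E LMo LMa rho \<longleftrightarrow>
     is_functor C E LMo LMa \<and>
     (\<forall>X\<in>Ob C. \<forall>X'\<in>Ob C. \<forall>f. f \<in> Hom C X (R' X') \<longrightarrow> rho X X' f \<in> Hom E (LMo X) (LMo X')) \<and>
     (\<forall>X\<in>Ob C. rho X X (eta' X) = ident E (LMo X)) \<and>
     (\<forall>X\<in>Ob C. \<forall>X'\<in>Ob C. \<forall>X''\<in>Ob C. \<forall>f g.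
        f \<in> Hom C X (R' X') \<longrightarrow> g \<in> Hom C X' (R' X'') \<longrightarrow>
        cmp E (LMo X) (LMo X') (LMo X'') (rho X' X'' g) (rho X X' f)
          = rho X X'' (cmp C X (R' X') (R' X'') (bind' X' X'' g) f))"

definition RA1 :: "('o \<times> 'p \<Rightarrow> 'o \<times> 'p) \<Rightarrow> 'p \<Rightarrow> 'o \<Rightarrow> 'o" where
  "RA1 R A X = fst (R (X, A))"

definition etaA1 :: "('o \<times> 'p \<Rightarrow> 'a \<times> 'b) \<Rightarrow> 'p \<Rightarrow> 'o \<Rightarrow> 'a" where
  "etaA1 eta A X = fst (eta (X, A))"

definition bindA1 ::
  "('o \<times> 'p \<Rightarrow> 'a \<times> 'b) \<Rightarrow> ('o \<times> 'p \<Rightarrow> 'o \<times> 'p \<Rightarrow> 'a \<times> 'b \<Rightarrow> 'a \<times> 'b) \<Rightarrow> 'p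
   \<Rightarrow> 'o \<Rightarrow> 'o \<Rightarrow> 'a \<Rightarrow> 'a" where
  "bindA1 eta bind A X X' f = fst (bind (X, A) (X', A) (f, snd (eta (X', A))))"

text \<open>The functor M_{A,1} : C -> C x D, X |-> R(X,A); on arrows u : X -> Y it is
  the functorial action of R on (u, id_A), i.e. bind(eta_(Y,A) o (u, id_A)).\<close>

definition MA1_ob :: "('o \<times> 'p \<Rightarrow> 'o \<times> 'p) \<Rightarrow> 'p \<Rightarrow> 'o \<Rightarrow> 'o \<times> 'p" where
  "MA1_ob R A X = R (X, A)"

definition MA1_arr ::
  "('o, 'a) cat \<Rightarrow> ('p, 'b) cat \<Rightarrow> ('o \<times> 'p \<Rightarrow> 'o \<times> 'p) \<Rightarrow> ('o \<times> 'p \<Rightarrow> 'a \<times> 'b)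
   \<Rightarrow> ('o \<times> 'p \<Rightarrow> 'o \<times> 'p \<Rightarrow> 'a \<times> 'b \<Rightarrow> 'a \<times> 'b) \<Rightarrow> 'p \<Rightarrow> 'o \<Rightarrow> 'o \<Rightarrow> 'a \<Rightarrow> 'a \<times> 'b" where
  "MA1_arr C D R eta bind A X Y u =
     bind (X, A) (Y, A) (cmp (prod_cat C D) (X, A) (Y, A) (R (Y, A)) (eta (Y, A)) (u, ident D A))"

definition rhoA1 ::
  "('o \<times> 'p \<Rightarrow> 'a \<times> 'b) \<Rightarrow> ('o \<times> 'p \<Rightarrow> 'o \<times> 'p \<Rightarrow> 'a \<times> 'b \<Rightarrow> 'a \<times> 'b) \<Rightarrow> 'p
   \<Rightarrow> 'o \<Rightarrow> 'o \<Rightarrow> 'a \<Rightarrow> 'a \<times> 'b" where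
  "rhoA1 eta bind A X X' f = bind (X, A) (X', A) (f, snd (eta (X', A)))"

end

theory Submission
  imports Defs
begin

lemma pc_Ob: "Ob (prod_cat C D) = Ob C \<times> Ob D" by (simp add: prod_cat_def)
lemma pc_Hom: "Hom (prod_cat C D) x y = Hom C (fst x) (fst y) \<times> Hom D (snd x) (snd y)"
  by (simp add: prod_cat_def split: prod.splits)
lemma pc_cmp: "cmp (prod_cat C D) x y z g f =
   (cmp C (fst x) (fst y) (fst z) (fst g) (fst f), cmp D (snd x) (snd y) (snd z) (snd g) (snd f))"
  by (simp add: prod_cat_def split: prod.splits)
lemma pc_ident: "ident (prod_cat C D) x = (ident C (fst x), ident D (snd x))"
  by (simp add: prod_cat_def split: prod.splits)

lemma pc_category: "category C \<Longrightarrow> category D \<Longrightarrow> category (prod_cat C D)"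
  unfolding category_def pc_Ob pc_Hom pc_cmp pc_ident
  by (simp add: mem_Times_iff)

theorem lemma2p5:
  fixes C :: "('o, 'a) cat" and D :: "('p, 'b) cat"
    and R :: "'o \<times> 'p \<Rightarrow> 'o \<times> 'p"
    and eta :: "'o \<times> 'p \<Rightarrow> 'a \<times> 'b"
    and bind :: "'o \<times> 'p \<Rightarrow> 'o \<times> 'p \<Rightarrow> 'a \<times> 'b \<Rightarrow> 'a \<times> 'b"
    and A :: 'p
  assumes "category C" and "category D"
    and "kleisli_monad (prod_cat C D) R eta bind"
    and "A \<in> Ob D"
  shows "left_module C (RA1 R A) (etaA1 eta A) (bindA1 eta bind A)
           (prod_cat C D) (MA1_ob R A) (MA1_arr C D R eta bind A) (rhoA1 eta bind A)"
proof -
  let ?P = "prod_cat C D"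
  have cP: "category ?P" using assms pc_category by blast
  note cat = cP[unfolded category_def]
  note mon = assms(3)[unfolded kleisli_monad_def]
  have ObP: "X \<in> Ob C \<Longrightarrow> (X, A) \<in> Ob ?P" for X using assms(4) by (simp add: pc_Ob)
  have RO: "x \<in> Ob ?P \<Longrightarrow> R x \<in> Ob ?P" for x using mon by blast
  have etaH: "x \<in> Ob ?P \<Longrightarrow> eta x \<in> Hom ?P x (R x)" for x using mon by blast
  have bindH: "x \<in> Ob ?P \<Longrightarrow> y \<in> Ob ?P \<Longrightarrow> f \<in> Hom ?P x (R y) \<Longrightarrow> bind x y f \<in> Hom ?P (R x) (R y)"
    for x y f using mon by blast
  have bindeta: "x \<in> Ob ?P \<Longrightarrow> bind x x (eta x) = ident ?P (R x)" for x using mon by blast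
  have bindl: "x \<in> Ob ?P \<Longrightarrow> y \<in> Ob ?P \<Longrightarrow> f \<in> Hom ?P x (R y) \<Longrightarrow>
     cmp ?P x (R x) (R y) (bind x y f) (eta x) = f" for x y f using mon by blast
  have bindas: "x \<in> Ob ?P \<Longrightarrow> y \<in> Ob ?P \<Longrightarrow> z \<in> Ob ?P \<Longrightarrow> f \<in> Hom ?P x (R y) \<Longrightarrow> g \<in> Hom ?P y (R z) \<Longrightarrow>
        bind x z (cmp ?P x (R y) (R z) (bind y z g) f)
          = cmp ?P (R x) (R y) (R z) (bind y z g) (bind x y f)" for x y z f g using mon by blast
  have cmpH: "x \<in> Ob ?P \<Longrightarrow> y \<in> Ob ?P \<Longrightarrow> z \<in> Ob ?P \<Longrightarrow> f \<in> Hom ?P x y \<Longrightarrow> g \<in> Hom ?P y z \<Longrightarrow>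
     cmp ?P x y z g f \<in> Hom ?P x z" for x y z f g using cat by blast
  have cmpA: "w \<in> Ob ?P \<Longrightarrow> x \<in> Ob ?P \<Longrightarrow> y \<in> Ob ?P \<Longrightarrow> z \<in> Ob ?P \<Longrightarrow>
     f \<in> Hom ?P w x \<Longrightarrow> g \<in> Hom ?P x y \<Longrightarrow> h \<in> Hom ?P y z \<Longrightarrow>
     cmp ?P w y z h (cmp ?P w x y g f) = cmp ?P w x z (cmp ?P x y z h g) f" for w x y z f g h
    using cat by blast
  have idr: "x \<in> Ob ?P \<Longrightarrow> y \<in> Ob ?P \<Longrightarrow> f \<in> Hom ?P x y \<Longrightarrow> cmp ?P x x y f (ident ?P x) = f" for x y f
    using cat by blast
  have idD: "ident D A \<in> Hom D A A" using assms(2,4) unfolding category_def by blast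
  have liftH: "u \<in> Hom C X Y \<Longrightarrow> (u, ident D A) \<in> Hom ?P (X, A) (Y, A)" for u X Y
    using idD by (simp add: pc_Hom)
  have idPA: "X \<in> Ob C \<Longrightarrow> ident ?P (X, A) = (ident C X, ident D A)" for X by (simp add: pc_ident)
  have sndeta: "X' \<in> Ob C \<Longrightarrow> snd (eta (X', A)) \<in> Hom D A (snd (R (X', A)))" for X'
    using etaH[OF ObP] by (auto simp: pc_Hom mem_Times_iff)
  have FH: "X' \<in> Ob C \<Longrightarrow> f \<in> Hom C X (fst (R (X', A))) \<Longrightarrow>
      (f, snd (eta (X', A))) \<in> Hom ?P (X, A) (R (X', A))" for X X' f
    using sndeta by (simp add: pc_Hom)
  have funct: "is_functor C ?P (MA1_ob R A) (MA1_arr C D R eta bind A)"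
    unfolding is_functor_def
  proof (intro conjI ballI allI impI)
    fix X assume X: "X \<in> Ob C"
    show "MA1_ob R A X \<in> Ob ?P" using RO[OF ObP[OF X]] by (simp add: MA1_ob_def)
    show "MA1_arr C D R eta bind A X X (ident C X) = ident ?P (MA1_ob R A X)"
      unfolding MA1_arr_def MA1_ob_def
      using idr[OF ObP[OF X] RO[OF ObP[OF X]] etaH[OF ObP[OF X]]] idPA[OF X] bindeta[OF ObP[OF X]]
      by simp
  next
    fix X Y u assume X: "X \<in> Ob C" and Y: "Y \<in> Ob C" and u: "u \<in> Hom C X Y"
    show "MA1_arr C D R eta bind A X Y u \<in> Hom ?P (MA1_ob R A X) (MA1_ob R A Y)"
      unfolding MA1_arr_def MA1_ob_def
      by (intro bindH ObP X Y cmpH RO etaH liftH u)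
  next
    fix X Y Z u v assume X: "X \<in> Ob C" and Y: "Y \<in> Ob C" and Z: "Z \<in> Ob C"
      and u: "u \<in> Hom C X Y" and v: "v \<in> Hom C Y Z"
    note O = ObP[OF X] ObP[OF Y] ObP[OF Z]
    let ?u = "(u, ident D A)" and ?v = "(v, ident D A)"
    have uv: "cmp ?P (X,A) (Y,A) (Z,A) ?v ?u = (cmp C X Y Z v u, ident D A)"
      using assms(2,4) idD unfolding category_def by (simp add: pc_cmp)
    let ?F = "cmp ?P (X,A) (Y,A) (R (Y,A)) (eta (Y,A)) ?u"
    let ?G = "cmp ?P (Y,A) (Z,A) (R (Z,A)) (eta (Z,A)) ?v"
    have FH': "?F \<in> Hom ?P (X,A) (R (Y,A))" by (intro cmpH O RO etaH liftH u)
    have GH': "?G \<in> Hom ?P (Y,A) (R (Z,A))" by (intro cmpH O RO etaH liftH v)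
    have "cmp ?P (R (X,A)) (R (Y,A)) (R (Z,A)) (bind (Y,A) (Z,A) ?G) (bind (X,A) (Y,A) ?F)
        = bind (X,A) (Z,A) (cmp ?P (X,A) (R (Y,A)) (R (Z,A)) (bind (Y,A) (Z,A) ?G) ?F)"
      using bindas[OF O(1,2,3) FH' GH'] by simp
    also have "cmp ?P (X,A) (R (Y,A)) (R (Z,A)) (bind (Y,A) (Z,A) ?G) ?F
        = cmp ?P (X,A) (Y,A) (R (Z,A)) (cmp ?P (Y,A) (R (Y,A)) (R (Z,A)) (bind (Y,A) (Z,A) ?G) (eta (Y,A))) ?u"
      using cmpA[OF O(1,2) RO[OF O(2)] RO[OF O(3)] liftH[OF u] etaH[OF O(2)] bindH[OF O(2,3) GH']] by simp
    also have "\<dots> = cmp ?P (X,A) (Y,A) (R (Z,A)) ?G ?u"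
      using bindl[OF O(2,3) GH'] by simp
    also have "\<dots> = cmp ?P (X,A) (Z,A) (R (Z,A)) (eta (Z,A)) (cmp ?P (X,A) (Y,A) (Z,A) ?v ?u)"
      using cmpA[OF O(1,2,3) RO[OF O(3)] liftH[OF u] liftH[OF v] etaH[OF O(3)]] by simp
    finally show "MA1_arr C D R eta bind A X Z (cmp C X Y Z v u) =
        cmp ?P (MA1_ob R A X) (MA1_ob R A Y) (MA1_ob R A Z)
          (MA1_arr C D R eta bind A Y Z v) (MA1_arr C D R eta bind A X Y u)"
      unfolding MA1_arr_def MA1_ob_def uv by simp
  qed
  show ?thesis
    unfolding left_module_def
  proof (intro conjI funct ballI allI impI)
    fix X X' f assume X: "X \<in> Ob C" and X': "X' \<in> Ob C" and f: "f \<in> Hom C X (RA1 R A X')"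
    show "rhoA1 eta bind A X X' f \<in> Hom ?P (MA1_ob R A X) (MA1_ob R A X')"
      unfolding rhoA1_def MA1_ob_def
      using f by (intro bindH ObP X X' FH) (simp_all add: RA1_def)
  next
    fix X assume X: "X \<in> Ob C"
    show "rhoA1 eta bind A X X (etaA1 eta A X) = ident ?P (MA1_ob R A X)"
      unfolding rhoA1_def etaA1_def MA1_ob_def using bindeta[OF ObP[OF X]] by simp
  next
    fix X X' X'' f g assume X: "X \<in> Ob C" and X': "X' \<in> Ob C" and X'': "X'' \<in> Ob C"
      and f: "f \<in> Hom C X (RA1 R A X')" and g: "g \<in> Hom C X' (RA1 R A X'')"
    note O = ObP[OF X] ObP[OF X'] ObP[OF X'']
    let ?F = "(f, snd (eta (X', A)))" and ?G = "(g, snd (eta (X'', A)))"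
    have F: "?F \<in> Hom ?P (X,A) (R (X',A))" using FH X' f by (simp add: RA1_def)
    have G: "?G \<in> Hom ?P (X',A) (R (X'',A))" using FH X'' g by (simp add: RA1_def)
    have bl: "cmp ?P (X',A) (R (X',A)) (R (X'',A)) (bind (X',A) (X'',A) ?G) (eta (X',A)) = ?G"
      using bindl[OF O(2,3) G] .
    have snd2: "cmp D A (snd (R (X',A))) (snd (R (X'',A))) (snd (bind (X',A) (X'',A) ?G)) (snd (eta (X',A)))
        = snd (eta (X'',A))"
      using arg_cong[OF bl, of snd] by (simp add: pc_cmp)
    have "cmp ?P (X,A) (R (X',A)) (R (X'',A)) (bind (X',A) (X'',A) ?G) ?F
        = (cmp C X (RA1 R A X') (RA1 R A X'') (bindA1 eta bind A X' X'' g) f, snd (eta (X'',A)))"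
      by (simp add: pc_cmp RA1_def bindA1_def snd2)
    then show "cmp ?P (MA1_ob R A X) (MA1_ob R A X') (MA1_ob R A X'')
          (rhoA1 eta bind A X' X'' g) (rhoA1 eta bind A X X' f) =
        rhoA1 eta bind A X X'' (cmp C X (RA1 R A X') (RA1 R A X'') (bindA1 eta bind A X' X'' g) f)"
      unfolding rhoA1_def MA1_ob_def using bindas[OF O F G] by simp
  qed
qed

end
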